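(* Let $a\geq 1$ and $b\geq 3$ be integers. Then the map $S_{a,b}:B\to B$ is not ergodic with respect to Lebesgue measure.
   Context: Let $\Lambda^n=\{x\in\mathbb{R}^n : 0\leq x_1\leq\cdots\leq x_n\}$. For integers $a,b\geq 1$ let $T_{a,b}:\Lambda^{a+b}\to\Lambda^{a+b}$ send $x$ to the vector obtained by arranging $x_1,\ldots,x_a,\,x_{a+1}-x_a,\ldots,x_{a+b}-x_a$ in nondecreasing order. Let $B=\{x\in\Lambda^{a+b-1} : x_{a+b-1}\leq 1\}$ and $p:\Lambda^{a+b}\to B$, $p(x)=(x_1/x_{a+b},\ldots,x_{a+b-1}/x_{a+b})$ (for $x_{a+b}>0$). The map $S_{a,b}:B\to B$ is defined (Lebesgue-a.e.) by $S_{a,b}\circ p=p\circ T_{a,b}$, i.e. $S_{a,b}(z)=p(T_{a,b}(z_1,\ldots,z_{a+b-1},1))$; this is well defined since $T_{a,b}$ is positively homogeneous of degree one. Ergodic means: every measurable $E\subset B$ with $S_{a,b}^{-1}(E)=E$ has zero or full Lebesgue measure. *)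

theory Defs
  imports "HOL-Analysis.Analysis"
begin

text \<open>Points of R^n are represented as functions nat => real restricted to the
index set {..<n} (0-based: coordinate x_i of the paper is x (i-1)), i.e. elements
of PiE {..<n} (\<lambda>_. UNIV), the space of the product measure.\<close>

definition Lam :: "nat \<Rightarrow> (nat \<Rightarrow> real) set" where
  "Lam n = {x \<in> PiE {..<n} (\<lambda>_. UNIV).
      (0 < n \<longrightarrow> 0 \<le> x 0) \<and> (\<forall>i. Suc i < n \<longrightarrow> x i \<le> x (Suc i))}"

definition T_map :: "nat \<Rightarrow> nat \<Rightarrow> (nat \<Rightarrow> real) \<Rightarrow> (nat \<Rightarrow> real)" where
  "T_map a b x = (let l = sort (map x [0..<a] @ map (\<lambda>i. x i - x (a - 1)) [a..<a+b])
                  in restrict (\<lambda>i. l ! i) {..<a+b})"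

definition B_set :: "nat \<Rightarrow> nat \<Rightarrow> (nat \<Rightarrow> real) set" where
  "B_set a b = {x \<in> Lam (a + b - 1). x (a + b - 2) \<le> 1}"

definition p_map :: "nat \<Rightarrow> (nat \<Rightarrow> real) \<Rightarrow> (nat \<Rightarrow> real)" where
  "p_map m x = restrict (\<lambda>i. x i / x (m - 1)) {..<m - 1}"

definition S_map :: "nat \<Rightarrow> nat \<Rightarrow> (nat \<Rightarrow> real) \<Rightarrow> (nat \<Rightarrow> real)" where
  "S_map a b z = p_map (a + b)
     (T_map a b (\<lambda>i. if i < a + b - 1 then z i else if i = a + b - 1 then 1 else undefined))"

definition lebesgue_n :: "nat \<Rightarrow> (nat \<Rightarrow> real) measure" where
  "lebesgue_n n = completion (Pi\<^sub>M {..<n} (\<lambda>_. lborel))"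

definition ergodic_map :: "'a measure \<Rightarrow> 'a set \<Rightarrow> ('a \<Rightarrow> 'a) \<Rightarrow> bool" where
  "ergodic_map M B S \<longleftrightarrow>
     (\<forall>E \<in> sets M. E \<subseteq> B \<longrightarrow> {z \<in> B. S z \<in> E} = E \<longrightarrow>
        emeasure M E = 0 \<or> emeasure M (B - E) = 0)"

end

theory Submission
  imports Defs
begin

lemma insort_nth:
  fixes x :: real
  assumes "sorted ys" "i \<le> length ys"
  shows "insort x ys ! i =
    (if i = 0 then (if ys = [] then x else min x (ys!0))
     else if i = length ys then max (ys!(i-1)) x
     else max (ys!(i-1)) (min x (ys!i)))"
  using assms
proof (induction ys arbitrary: i)
  case Nil
  then show ?case by simp
next
  case (Cons y ys)
  have yl: "\<forall>z\<in>set ys. y \<le> z" using Cons.prems(1) by simp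
  have sys: "sorted ys" using Cons.prems(1) by simp
  show ?case
  proof (cases "x \<le> y")
    case True
    show ?thesis
    proof (cases i)
      case 0 then show ?thesis using True by simp
    next
      case (Suc j)
      have "(y#ys)!j \<ge> x"
        using True yl Cons.prems(2) Suc
        by (metis (no_types, lifting) Suc_le_eq length_Cons less_Suc_eq_0_disj nth_Cons_0 nth_Cons_Suc nth_mem order_trans)
      then show ?thesis using True Suc Cons.prems by (auto simp: min_def max_def)
    qed
  next
    case False
    show ?thesis
    proof (cases i)
      case 0 then show ?thesis using False by simp
    next
      case (Suc j)
      have ij: "j \<le> length ys" using Suc Cons.prems(2) by simp
      have IH: "insort x ys ! j = (if j = 0 then (if ys = [] then x else min x (ys!0))
     else if j = length ys then max (ys!(j-1)) x
     else max (ys!(j-1)) (min x (ys!j)))" using Cons.IH[OF sys ij] .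
      show ?thesis
      proof (cases j)
        case 0
        then show ?thesis using False Suc IH yl
          by (cases ys) (auto simp: min_def max_def)
      next
        case (Suc k)
        then show ?thesis using False \<open>i = Suc j\<close> IH by (auto simp: nth_Cons')
      qed
    qed
  qed
qed
lemma sort_nth_measurable:
  fixes fs :: "('a \<Rightarrow> real) list"
  assumes "\<forall>f\<in>set fs. f \<in> borel_measurable M" "i < length fs"
  shows "(\<lambda>z. sort (map (\<lambda>f. f z) fs) ! i) \<in> borel_measurable M"
  using assms
proof (induction fs arbitrary: i)
  case Nil
  then show ?case by simp
next
  case (Cons f fs)
  let ?s = "\<lambda>z. sort (map (\<lambda>g. g z) fs)"
  have fm: "f \<in> borel_measurable M" using Cons.prems by simp
  have IH: "\<And>j. j < length fs \<Longrightarrow> (\<lambda>z. ?s z ! j) \<in> borel_measurable M"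
    using Cons.IH Cons.prems by simp
  have nil: "\<And>z. ?s z = [] \<longleftrightarrow> fs = []"
    by (metis length_map length_sort length_0_conv)
  have eq: "(\<lambda>z. sort (map (\<lambda>g. g z) (f#fs)) ! i) = (\<lambda>z.
    (if i = 0 then (if fs = [] then f z else min (f z) (?s z!0))
     else if i = length fs then max (?s z!(i-1)) (f z)
     else max (?s z!(i-1)) (min (f z) (?s z!i))))"
    using Cons.prems(2) nil by (intro ext) (simp add: insort_nth)
  show ?case unfolding eq
    using Cons.prems(2) fm IH
    by (cases "i = 0"; cases "fs = []"; cases "i = length fs")
       (auto intro!: borel_measurable_max borel_measurable_min)
qed
definition ext :: "nat \<Rightarrow> nat \<Rightarrow> (nat \<Rightarrow> real) \<Rightarrow> nat \<Rightarrow> real" where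
  "ext a b z = (\<lambda>i. if i < a + b - 1 then z i else if i = a + b - 1 then 1 else undefined)"

lemma ext_meas:
  "(\<lambda>z. ext a b z i) \<in> borel_measurable (Pi\<^sub>M {..<a+b-1} (\<lambda>_. lborel))"
  unfolding ext_def
  by (cases "i < a + b - 1"; cases "i = a + b - 1") auto

lemma T_meas:
  assumes "j < a + b"
  shows "(\<lambda>z. T_map a b (ext a b z) j) \<in> borel_measurable (Pi\<^sub>M {..<a+b-1} (\<lambda>_. lborel))"
proof -
  define fs where "fs = map (\<lambda>i z. ext a b z i) [0..<a] @ map (\<lambda>i z. ext a b z i - ext a b z (a-1)) [a..<a+b]"
  have eq: "(\<lambda>z. T_map a b (ext a b z) j) = (\<lambda>z. sort (map (\<lambda>f. f z) fs) ! j)"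
    using assms unfolding T_map_def fs_def by (intro ext) (simp add: Let_def o_def)
  have "\<forall>f\<in>set fs. f \<in> borel_measurable (Pi\<^sub>M {..<a+b-1} (\<lambda>_. lborel))"
    unfolding fs_def using ext_meas by auto
  moreover have "j < length fs" using assms unfolding fs_def by simp
  ultimately show ?thesis unfolding eq by (rule sort_nth_measurable)
qed

lemma S_eq: "S_map a b = (\<lambda>z. p_map (a+b) (T_map a b (ext a b z)))"
  unfolding S_map_def ext_def by simp

lemma S_meas:
  assumes "a + b \<ge> 1"
  shows "S_map a b \<in> measurable (Pi\<^sub>M {..<a+b-1} (\<lambda>_. lborel)) (Pi\<^sub>M {..<a+b-1} (\<lambda>_. lborel))"
  unfolding S_eq p_map_def
  apply (rule measurable_restrict)
  subgoal for i
    unfolding measurable_lborel1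
    apply (rule borel_measurable_divide)
    apply (rule T_meas, use assms in simp)+
    done
  done


lemma B_mono:
  assumes "z \<in> B_set a b" "i \<le> j" "j < a + b - 1"
  shows "z i \<le> z j"
  using assms(2,3)
proof (induction j)
  case 0 then show ?case by simp
next
  case (Suc j)
  have "z j \<le> z (Suc j)" using assms(1) Suc.prems unfolding B_set_def Lam_def by auto
  then show ?case using Suc by (cases "i = Suc j") auto
qed

lemma B_nonneg:
  assumes "z \<in> B_set a b" "i < a + b - 1"
  shows "0 \<le> z i"
proof -
  have "0 \<le> z 0" using assms unfolding B_set_def Lam_def by auto
  also have "z 0 \<le> z i" using B_mono[OF assms(1) _ assms(2)] by simp
  finally show ?thesis .
qed
lemma sort_snoc2:
  fixes L0 :: "real list"
  assumes "\<forall>w\<in>set L0. w \<le> u" "u \<le> v"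
  shows "sort (L0 @ [u, v]) = sort L0 @ [u, v]"
  apply (rule properties_for_sort)
   apply simp
  using assms by (auto simp: sorted_append)

lemma step:
  fixes a b :: nat and z :: "nat \<Rightarrow> real"
  defines "s \<equiv> (\<Sum>i<a+b-1. z i)" and "q \<equiv> z (a - 1)"
  assumes ab: "a \<ge> 1" "b \<ge> 3" and zB: "z \<in> B_set a b"
    and s1: "s < 1" and s2: "s < 2 * z (a+b-2)"
  shows "S_map a b z \<in> B_set a b"
    "(\<Sum>i<a+b-1. S_map a b z i) = (s - (real b - 1) * q) / (1 - q)"
    "S_map a b z (a+b-2) = (z (a+b-2) - q) / (1 - q)"
    "0 \<le> q" "q < 1"
proof -
  define K where "K = a + b - 2"
  define m where "m = a + b - 1"
  have mK: "m = Suc K" "a < K" using ab unfolding K_def m_def by auto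
  have nn: "\<And>i. i < m \<Longrightarrow> 0 \<le> z i" using B_nonneg[OF zB] unfolding m_def by auto
  have mono: "\<And>i j. i \<le> j \<Longrightarrow> j < m \<Longrightarrow> z i \<le> z j" using B_mono[OF zB] unfolding m_def by auto
  have zK1: "z K \<le> 1" using zB unfolding B_set_def K_def by auto
  have q0: "0 \<le> q" unfolding q_def using nn mK by auto
  have d: "a - 1 \<noteq> a" "a - 1 \<noteq> K" "a \<noteq> K" using mK ab by auto
  have "z (a-1) + z a + z K = sum z {a-1, a, K}" using d by simp
  also have "\<dots> \<le> s" unfolding s_def m_def[symmetric]
    apply (rule sum_mono2) using mK nn by auto
  finally have "z (a-1) + z a + z K \<le> s" .
  moreover have "z (a-1) \<le> z a" using mono mK by auto
  ultimately have q2: "2 * q < z K" using s2 unfolding q_def K_def by linarith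
  have q1: "q < 1" using q2 zK1 q0 by linarith
  show "0 \<le> q" "q < 1" by (fact q0) (fact q1)
  define x where "x = ext a b z"
  define L0 where "L0 = map z [0..<a] @ map (\<lambda>i. z i - q) [a..<K]"
  define u where "u = z K - q"
  define v where "v = 1 - q"
  have upt_eq: "[a..<a+b] = [a..<K] @ [K, m]"
  proof -
    have e: "a + b = K + 2" using ab unfolding K_def by simp
    have "[a..<a+b] = [a..<K + 2]" by (simp only: e)
    also have "\<dots> = [a..<K] @ [K..<K+2]" using mK by (intro upt_add_eq_append) auto
    also have "[K..<K+2] = [K, m]" using mK by (simp add: numeral_2_eq_2)
    finally show ?thesis .
  qed
  have xz: "\<And>i. i < m \<Longrightarrow> x i = z i" and xm: "x m = 1"
    unfolding x_def ext_def m_def by auto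
  have xq: "x (a - 1) = q" using xz mK ab unfolding q_def by auto
  have L: "map x [0..<a] @ map (\<lambda>i. x i - x (a-1)) [a..<a+b] = L0 @ [u, v]"
    unfolding upt_eq L0_def u_def v_def using xz xm xq mK by auto
  have Lu: "\<forall>w\<in>set L0. w \<le> u"
  proof
    fix w assume "w \<in> set L0"
    then consider (i) i where "i < a" "w = z i" | (j) j where "a \<le> j" "j < K" "w = z j - q"
      unfolding L0_def by auto
    then show "w \<le> u"
    proof cases
      case (i i) then have "z i \<le> q" unfolding q_def using mono mK by auto
      then show ?thesis using i q2 unfolding u_def by linarith
    next
      case (j j) then show ?thesis using mono mK unfolding u_def by auto
    qed
  qed
  have uv: "u \<le> v" unfolding u_def v_def using zK1 by simp
  define y where "y = sort L0 @ [u, v]"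
  have sortL: "sort (map x [0..<a] @ map (\<lambda>i. x i - x (a-1)) [a..<a+b]) = y"
    unfolding L y_def by (rule sort_snoc2[OF Lu uv])
  have lenL0: "length L0 = K" unfolding L0_def using mK by simp
  have leny: "length y = Suc m" unfolding y_def using lenL0 mK by simp
  have yK: "y ! K = u" and ym: "y ! m = v" unfolding y_def using lenL0 mK by (auto simp: nth_append)
  have ysorted: "sorted y" using sortL by (metis sorted_sort)
  have ysetL: "set y = set (L0 @ [u,v])" unfolding y_def by simp
  have vpos: "v > 0" unfolding v_def using q1 by simp
  have Sz: "\<And>i. i < m \<Longrightarrow> S_map a b z i = y ! i / v"
    unfolding S_eq p_map_def T_map_def x_def[symmetric]
    using sortL ym m_def by (auto simp: Let_def)
  have Szout: "\<And>i. i \<ge> m \<Longrightarrow> S_map a b z i = undefined"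
    unfolding S_eq p_map_def m_def by auto
  show "S_map a b z (a+b-2) = (z (a+b-2) - q) / (1 - q)"
    using Sz[of K] yK mK unfolding u_def v_def K_def by simp
  have "(\<Sum>i<m. y ! i) = (\<Sum>i<K. sort L0 ! i) + u"
    unfolding mK(1) using yK lenL0 by (simp add: y_def nth_append)
  also have "(\<Sum>i<K. sort L0 ! i) = sum_list (sort L0)"
    using lenL0 by (simp add: sum_list_sum_nth atLeast0LessThan)
  also have "\<dots> = sum_list L0" by (metis mset_sort sum_mset_sum_list)
  also have "\<dots> = (\<Sum>i<a. z i) + (\<Sum>i\<in>{a..<K}. (z i - q))"
    unfolding L0_def by (simp add: interv_sum_list_conv_sum_set_nat atLeast0LessThan)
  also have "\<dots> = (\<Sum>i<K. z i) - real (K - a) * q"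
  proof -
    have "(\<Sum>i<K. z i) = (\<Sum>i<a. z i) + (\<Sum>i\<in>{a..<K}. z i)"
      using mK by (metis atLeast0LessThan less_imp_le_nat sum.atLeastLessThan_concat zero_le)
    then show ?thesis by (simp add: sum_subtractf)
  qed
  finally have sy: "(\<Sum>i<m. y ! i) = s - (real b - 1) * q"
    unfolding s_def m_def[symmetric] mK(1) u_def using ab unfolding K_def
    by (simp add: of_nat_diff algebra_simps)
  show "(\<Sum>i<a+b-1. S_map a b z i) = (s - (real b - 1) * q) / (1 - q)"
  proof -
    have "(\<Sum>i<m. S_map a b z i) = (\<Sum>i<m. y!i / v)" by (rule sum.cong) (auto simp: Sz)
    also have "\<dots> = (\<Sum>i<m. y!i) / v" by (simp add: sum_divide_distrib)
    finally show ?thesis unfolding m_def[symmetric] sy v_def .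
  qed
  have ynn: "\<forall>w\<in>set y. 0 \<le> w"
  proof
    fix w assume "w \<in> set y"
    then have "w \<in> set L0 \<or> w = u \<or> w = v" unfolding ysetL by auto
    moreover have "\<forall>w\<in>set L0. 0 \<le> w"
    proof
      fix w assume "w \<in> set L0"
      then consider (i) i where "i < a" "w = z i" | (j) j where "a \<le> j" "j < K" "w = z j - q"
        unfolding L0_def by auto
      then show "0 \<le> w"
      proof cases
        case (i i) then show ?thesis using nn mK by auto
      next
        case (j j) then have "z (a-1) \<le> z j" using mono mK by auto
        then show ?thesis using j unfolding q_def by simp
      qed
    qed
    ultimately show "0 \<le> w" using q2 q0 vpos unfolding u_def by auto
  qed
  have PiE: "S_map a b z \<in> PiE {..<m} (\<lambda>_. UNIV)"
    unfolding S_eq p_map_def m_def by (simp add: restrict_PiE_iff)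
  have z0: "0 \<le> S_map a b z 0"
  proof -
    have "0 \<le> y ! 0" using ynn leny by (metis nth_mem zero_less_Suc)
    then show ?thesis using Sz[of 0] mK vpos by simp
  qed
  have srt: "\<And>i. Suc i < m \<Longrightarrow> S_map a b z i \<le> S_map a b z (Suc i)"
  proof -
    fix i assume i: "Suc i < m"
    have "y ! i \<le> y ! Suc i" using ysorted leny i by (intro sorted_nth_mono) auto
    then show "S_map a b z i \<le> S_map a b z (Suc i)"
      using Sz[of i] Sz[of "Suc i"] i vpos by (simp add: divide_right_mono)
  qed
  have lastle: "S_map a b z K \<le> 1" using Sz[of K] yK uv vpos mK by simp
  show "S_map a b z \<in> B_set a b"
    unfolding B_set_def Lam_def using PiE z0 srt lastle unfolding m_def K_def by auto
qed


definition ssum :: "nat \<Rightarrow> nat \<Rightarrow> (nat \<Rightarrow> real) \<Rightarrow> real" where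
  "ssum a b z = (\<Sum>i<a+b-1. z i)"
definition Dset :: "nat \<Rightarrow> nat \<Rightarrow> (nat \<Rightarrow> real) set" where
  "Dset a b = {z \<in> B_set a b. ssum a b z < 1 \<and> ssum a b z < 2 * z (a+b-2)}"
definition A1 :: "nat \<Rightarrow> nat \<Rightarrow> (nat \<Rightarrow> real) set" where
  "A1 a b = {z \<in> Dset a b. real b - 1 - ssum a b z < 4 * ((real b - 1) * z (a+b-2) - ssum a b z)}"
definition A2 :: "nat \<Rightarrow> nat \<Rightarrow> (nat \<Rightarrow> real) set" where
  "A2 a b = {z \<in> Dset a b. real b - 1 - ssum a b z > 4 * ((real b - 1) * z (a+b-2) - ssum a b z)}"

lemma alg:
  fixes s t q c :: real
  assumes "0 \<le> q" "q < 1" "c \<ge> 2" "s < 1" "s < 2 * t"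
  shows "(s - c * q) / (1 - q) < 1"
    "(s - c * q) / (1 - q) < 2 * ((t - q) / (1 - q))"
    "c - (s - c * q) / (1 - q) = (c - s) / (1 - q)"
    "c * ((t - q) / (1 - q)) - (s - c * q) / (1 - q) = (c * t - s) / (1 - q)"
proof -
  have v: "1 - q > 0" using assms by simp
  have "c * q \<ge> 2 * q" using assms by (intro mult_right_mono) auto
  then show "(s - c * q) / (1 - q) < 1" using v assms by (simp add: divide_less_eq)
  have "s - c * q < 2 * t - 2 * q" using assms \<open>c * q \<ge> 2 * q\<close> by linarith
  then have "(s - c * q) / (1 - q) < (2 * t - 2 * q) / (1 - q)"
    using v by (intro divide_strict_right_mono)
  then show "(s - c * q) / (1 - q) < 2 * ((t - q) / (1 - q))" by (simp add: algebra_simps)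
  show "c - (s - c * q) / (1 - q) = (c - s) / (1 - q)"
    using v by (simp add: field_simps)
  have "c * ((t - q) / (1 - q)) - (s - c * q) / (1 - q) = (c * (t - q) - (s - c * q)) / (1 - q)"
    by (simp add: diff_divide_distrib[symmetric] times_divide_eq_right)
  also have "c * (t - q) - (s - c * q) = c * t - s" by (simp add: algebra_simps)
  finally show "c * ((t - q) / (1 - q)) - (s - c * q) / (1 - q) = (c * t - s) / (1 - q)" .
qed

lemma D_step:
  assumes ab: "a \<ge> 1" "b \<ge> 3" and z: "z \<in> Dset a b"
  shows "S_map a b z \<in> Dset a b"
    "real b - 1 - ssum a b (S_map a b z) = (real b - 1 - ssum a b z) / (1 - z (a - 1))"
    "(real b - 1) * S_map a b z (a+b-2) - ssum a b (S_map a b z)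
       = ((real b - 1) * z (a+b-2) - ssum a b z) / (1 - z (a - 1))"
    "1 - z (a - 1) > 0"
proof -
  have zB: "z \<in> B_set a b" and s1: "ssum a b z < 1" and s2: "ssum a b z < 2 * z (a+b-2)"
    using z unfolding Dset_def by auto
  note st = step[OF ab zB s1[unfolded ssum_def] s2[unfolded ssum_def]]
  have c2: "real b - 1 \<ge> 2" using ab by simp
  note al = alg[OF st(4) st(5) c2 s1[unfolded ssum_def] s2[unfolded ssum_def]]
  show "S_map a b z \<in> Dset a b"
    unfolding Dset_def ssum_def using st(1,2,3) al(1,2) by simp
  show "real b - 1 - ssum a b (S_map a b z) = (real b - 1 - ssum a b z) / (1 - z (a - 1))"
    unfolding ssum_def using st(2) al(3) by simp
  show "(real b - 1) * S_map a b z (a+b-2) - ssum a b (S_map a b z)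
       = ((real b - 1) * z (a+b-2) - ssum a b z) / (1 - z (a - 1))"
    unfolding ssum_def using st(2,3) al(4) by simp
  show "1 - z (a - 1) > 0" using st(5) by simp
qed

lemma A1_step:
  assumes "a \<ge> 1" "b \<ge> 3" "z \<in> A1 a b"
  shows "S_map a b z \<in> A1 a b"
proof -
  have z: "z \<in> Dset a b" using assms(3) unfolding A1_def by auto
  note d = D_step[OF assms(1,2) z]
  have "real b - 1 - ssum a b z < 4 * ((real b - 1) * z (a+b-2) - ssum a b z)"
    using assms(3) unfolding A1_def by auto
  then have "(real b - 1 - ssum a b z) / (1 - z (a - 1)) < 4 * (((real b - 1) * z (a+b-2) - ssum a b z) / (1 - z (a - 1)))"
    using d(4) by (simp add: divide_strict_right_mono)
  then have "real b - 1 - ssum a b (S_map a b z) < 4 * ((real b - 1) * S_map a b z (a+b-2) - ssum a b (S_map a b z))" using d(2,3) by simp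
  then show ?thesis unfolding A1_def using d(1) by simp
qed

lemma A2_step:
  assumes "a \<ge> 1" "b \<ge> 3" "z \<in> A2 a b"
  shows "S_map a b z \<in> A2 a b"
proof -
  have z: "z \<in> Dset a b" using assms(3) unfolding A2_def by auto
  note d = D_step[OF assms(1,2) z]
  have "real b - 1 - ssum a b z > 4 * ((real b - 1) * z (a+b-2) - ssum a b z)"
    using assms(3) unfolding A2_def by auto
  then have "(real b - 1 - ssum a b z) / (1 - z (a - 1)) > 4 * (((real b - 1) * z (a+b-2) - ssum a b z) / (1 - z (a - 1)))"
    using d(4) by (simp add: divide_strict_right_mono)
  then have "real b - 1 - ssum a b (S_map a b z) > 4 * ((real b - 1) * S_map a b z (a+b-2) - ssum a b (S_map a b z))" using d(2,3) by simp
  then show ?thesis unfolding A2_def using d(1) by simp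
qed

lemma A2_iter:
  assumes "a \<ge> 1" "b \<ge> 3" "z \<in> A2 a b"
  shows "(S_map a b ^^ k) z \<in> A2 a b"
proof (induction k)
  case 0 then show ?case using assms by simp
next
  case (Suc k) then show ?case using A2_step[OF assms(1,2) Suc.IH] by simp
qed

lemma A12_disj: "A1 a b \<inter> A2 a b = {}"
  unfolding A1_def A2_def by auto



lemma comp_meas:
  fixes m i :: nat
  shows "(\<lambda>x. x i) \<in> borel_measurable (Pi\<^sub>M {..<m} (\<lambda>_. (lborel::real measure)))"
proof (cases "i < m")
  case True
  have "(\<lambda>x. x i) \<in> Pi\<^sub>M {..<m} (\<lambda>_. (lborel::real measure)) \<rightarrow>\<^sub>M lborel"
    by (rule measurable_component_singleton) (use True in simp)
  then show ?thesis by simp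
next
  case False
  have c: "\<And>x. x \<in> space (Pi\<^sub>M {..<m} (\<lambda>_. (lborel::real measure))) \<Longrightarrow> x i = undefined"
    using False by (auto simp: space_PiM PiE_def extensional_def)
  show ?thesis
    apply (subst measurable_cong[where g="\<lambda>x. undefined"])
    using c apply simp
    apply simp
    done
qed

lemma space_P: "space (Pi\<^sub>M {..<m} (\<lambda>_. (lborel::real measure))) = PiE {..<m} (\<lambda>_. UNIV)"
  by (simp add: space_PiM)

lemma B_sets: "B_set a b \<in> sets (Pi\<^sub>M {..<a+b-1} (\<lambda>_. lborel))"
proof -
  have "B_set a b = {x \<in> space (Pi\<^sub>M {..<a+b-1} (\<lambda>_. lborel)).
     (0 < a+b-1 \<longrightarrow> 0 \<le> x 0) \<and> (\<forall>i\<in>{..<a+b-2}. x i \<le> x (Suc i)) \<and> x (a+b-2) \<le> 1}"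
    unfolding B_set_def Lam_def space_P by (auto simp: less_diff_conv)
  also have "\<dots> \<in> sets (Pi\<^sub>M {..<a+b-1} (\<lambda>_. lborel))"
    by (intro sets.sets_Collect_conj sets.sets_Collect_imp sets.sets_Collect_const
        sets.sets_Collect_finite_All borel_measurable_le comp_meas borel_measurable_const finite_lessThan)
  finally show ?thesis .
qed
lemma ssum_meas: "ssum a b \<in> borel_measurable (Pi\<^sub>M {..<m} (\<lambda>_. (lborel::real measure)))"
proof -
  have "(\<lambda>z. \<Sum>i<a+b-1. z i) \<in> borel_measurable (Pi\<^sub>M {..<m} (\<lambda>_. (lborel::real measure)))"
    by (intro borel_measurable_sum comp_meas)
  then show ?thesis unfolding ssum_def[abs_def] .
qed

lemma A_sets:
  "A1 a b \<in> sets (Pi\<^sub>M {..<a+b-1} (\<lambda>_. lborel))"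
  "A2 a b \<in> sets (Pi\<^sub>M {..<a+b-1} (\<lambda>_. lborel))"
proof -
  let ?P = "Pi\<^sub>M {..<a+b-1} (\<lambda>_. (lborel::real measure))"
  have m1: "(\<lambda>x. real b - 1 - ssum a b x) \<in> borel_measurable ?P"
    by (intro borel_measurable_diff borel_measurable_const ssum_meas)
  have m2: "(\<lambda>x. 4 * ((real b - 1) * x (a+b-2) - ssum a b x)) \<in> borel_measurable ?P"
    by (intro borel_measurable_times borel_measurable_diff borel_measurable_const ssum_meas comp_meas)
  have m3: "(\<lambda>x. 2 * x (a+b-2)) \<in> borel_measurable ?P"
    by (intro borel_measurable_times borel_measurable_const comp_meas)
  have D: "{x \<in> space ?P. ssum a b x < 1 \<and> ssum a b x < 2 * x (a+b-2)} \<in> sets ?P"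
    by (intro sets.sets_Collect_conj borel_measurable_less ssum_meas m3 borel_measurable_const)
  have "A1 a b = B_set a b \<inter> ({x \<in> space ?P. ssum a b x < 1 \<and> ssum a b x < 2 * x (a+b-2)}
     \<inter> {x \<in> space ?P. real b - 1 - ssum a b x < 4 * ((real b - 1) * x (a+b-2) - ssum a b x)})"
    unfolding A1_def Dset_def using B_sets sets.sets_into_space by blast
  also have "\<dots> \<in> sets ?P"
    by (intro sets.Int B_sets D borel_measurable_less m1 m2)
  finally show "A1 a b \<in> sets ?P" .
  have "A2 a b = B_set a b \<inter> ({x \<in> space ?P. ssum a b x < 1 \<and> ssum a b x < 2 * x (a+b-2)}
     \<inter> {x \<in> space ?P. 4 * ((real b - 1) * x (a+b-2) - ssum a b x) < real b - 1 - ssum a b x})"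
    unfolding A2_def Dset_def using B_sets sets.sets_into_space by blast
  also have "\<dots> \<in> sets ?P"
    by (intro sets.Int B_sets D borel_measurable_less m1 m2)
  finally show "A2 a b \<in> sets ?P" .
qed


definition boxs :: "nat \<Rightarrow> nat \<Rightarrow> real \<Rightarrow> real \<Rightarrow> (nat \<Rightarrow> real) set" where
  "boxs a b lo hi = PiE {..<a+b-1} (\<lambda>i. if i < a+b-2
     then {real i / (100 * real (a+b-2) ^ 2) .. real (Suc i) / (100 * real (a+b-2) ^ 2)} else {lo..hi})"

lemma box_props:
  assumes ab: "a \<ge> 1" "b \<ge> 3" and z: "z \<in> boxs a b lo hi"
    and lh: "1/8 \<le> lo" "lo \<le> hi" "hi \<le> 3/4"
  shows "z \<in> Dset a b" "lo \<le> z (a+b-2)" "z (a+b-2) \<le> hi"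
    "0 \<le> ssum a b z - z (a+b-2)" "ssum a b z - z (a+b-2) \<le> 1/100"
proof -
  define K where "K = a + b - 2"
  define d where "d = 1 / (100 * real K ^ 2)"
  have mK: "a + b - 1 = Suc K" and K2: "K \<ge> 2" using ab unfolding K_def by auto
  have dpos: "d > 0" unfolding d_def using K2 by simp
  have Kd: "real K * d \<le> 1/100"
  proof -
    have "real K * d = 1 / (100 * real K)" unfolding d_def using K2 by (simp add: power2_eq_square)
    also have "\<dots> \<le> 1/100" using K2 by (simp add: divide_simps)
    finally show ?thesis .
  qed
  have KKd: "real K * (real K * d) = 1/100" unfolding d_def using K2 by (simp add: power2_eq_square)
  have zi: "\<And>i. i < K \<Longrightarrow> real i * d \<le> z i \<and> z i \<le> real (Suc i) * d"
  proof -
    fix i assume i: "i < K"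
    have all: "\<forall>j\<in>{..<Suc K}. z j \<in> (if j < K then {real j / (100 * real K ^ 2) .. real (Suc j) / (100 * real K ^ 2)} else {lo..hi})"
      using z unfolding boxs_def K_def[symmetric] mK by (simp add: PiE_iff)
    have "z i \<in> (if i < K then {real i / (100 * real K ^ 2) .. real (Suc i) / (100 * real K ^ 2)} else {lo..hi})"
      using bspec[OF all, of i] i by simp
    then show "real i * d \<le> z i \<and> z i \<le> real (Suc i) * d" using i unfolding d_def by simp
  qed
  have zK: "lo \<le> z K" "z K \<le> hi"
  proof -
    have all: "\<forall>j\<in>{..<Suc K}. z j \<in> (if j < K then {real j / (100 * real K ^ 2) .. real (Suc j) / (100 * real K ^ 2)} else {lo..hi})"
      using z unfolding boxs_def K_def[symmetric] mK by (simp add: PiE_iff)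
    have "z K \<in> {lo..hi}" using bspec[OF all, of K] by simp
    then show "lo \<le> z K" "z K \<le> hi" by auto
  qed
  then show "lo \<le> z (a+b-2)" "z (a+b-2) \<le> hi" unfolding K_def by auto
  have zi2: "\<And>i. i < K \<Longrightarrow> z i \<le> real K * d"
  proof -
    fix i assume "i < K"
    then have "real (Suc i) * d \<le> real K * d" using dpos by (intro mult_right_mono) auto
    then show "z i \<le> real K * d" using zi[OF \<open>i < K\<close>] by linarith
  qed
  have zi0: "\<And>i. i < K \<Longrightarrow> 0 \<le> z i"
    using zi dpos by (meson mult_nonneg_nonneg of_nat_0_le_iff less_le order_trans)
  have ss: "ssum a b z = (\<Sum>i<K. z i) + z K" unfolding ssum_def mK by simp
  have e0: "0 \<le> (\<Sum>i<K. z i)" using zi0 by (intro sum_nonneg) auto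
  have "(\<Sum>i<K. z i) \<le> (\<Sum>i<K. real K * d)" using zi2 by (intro sum_mono) auto
  also have "\<dots> = 1/100" using KKd by simp
  finally have e1: "(\<Sum>i<K. z i) \<le> 1/100" .
  show "0 \<le> ssum a b z - z (a+b-2)" "ssum a b z - z (a+b-2) \<le> 1/100"
    using ss e0 e1 unfolding K_def by auto
  have PiE: "z \<in> PiE {..<a+b-1} (\<lambda>_. UNIV)" using z unfolding boxs_def by (auto simp: PiE_iff)
  have srt: "\<forall>i. Suc i < a + b - 1 \<longrightarrow> z i \<le> z (Suc i)"
  proof (intro allI impI)
    fix i assume i: "Suc i < a + b - 1"
    show "z i \<le> z (Suc i)"
    proof (cases "Suc i < K")
      case True
      then show ?thesis using zi[of i] zi[of "Suc i"] by auto
    next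
      case False
      then have "Suc i = K" using i mK by auto
      then show ?thesis using zi2[of i] Kd zK lh by auto
    qed
  qed
  have z0: "0 \<le> z 0" using zi0 K2 by auto
  have "z \<in> B_set a b" unfolding B_set_def Lam_def using PiE srt z0 zK lh unfolding K_def by auto
  then show "z \<in> Dset a b" unfolding Dset_def using ss e0 e1 zK lh unfolding K_def by auto
qed

lemma box_A1:
  assumes ab: "a \<ge> 1" "b \<ge> 3" shows "boxs a b (1/2) (3/4) \<subseteq> A1 a b"
proof
  fix z assume z: "z \<in> boxs a b (1/2) (3/4)"
  note bp = box_props[OF ab z, simplified]
  define t where "t = z (a+b-2)"
  define e where "e = ssum a b z - t"
  define \<beta> where "\<beta> = real b - 1"
  have t: "1/2 \<le> t" "t \<le> 3/4" and e: "0 \<le> e" "e \<le> 1/100" and \<beta>: "\<beta> \<ge> 2"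
    using bp ab unfolding t_def e_def \<beta>_def by auto
  have "t * (4 * \<beta> - 3) \<ge> (1/2) * (4 * \<beta> - 3)" using t \<beta> by (intro mult_right_mono) auto
  then have "\<beta> - (e + t) < 4 * (\<beta> * t - (e + t))" using e \<beta> by (simp add: algebra_simps)
  then show "z \<in> A1 a b" unfolding A1_def using bp(1) unfolding t_def e_def \<beta>_def by simp
qed

lemma box_A2:
  assumes ab: "a \<ge> 1" "b \<ge> 3" shows "boxs a b (1/8) (1/4) \<subseteq> A2 a b"
proof
  fix z assume z: "z \<in> boxs a b (1/8) (1/4)"
  note bp = box_props[OF ab z, simplified]
  define t where "t = z (a+b-2)"
  define e where "e = ssum a b z - t"
  define \<beta> where "\<beta> = real b - 1"
  have t: "1/8 \<le> t" "t \<le> 1/4" and e: "0 \<le> e" "e \<le> 1/100" and \<beta>: "\<beta> \<ge> 2"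
    using bp ab unfolding t_def e_def \<beta>_def by auto
  have "\<beta> * t \<le> \<beta> * (1/4)" using t \<beta> by (intro mult_left_mono) auto
  then have h: "\<beta> * t * 4 \<le> \<beta>" by simp
  have "\<beta> * t * 4 < \<beta> + (e * 3 + t * 3)" using h e t \<beta> by linarith
  then have "\<beta> - (e + t) > 4 * (\<beta> * t - (e + t))" by (simp add: algebra_simps)
  then show "z \<in> A2 a b" unfolding A2_def using bp(1) unfolding t_def e_def \<beta>_def by simp
qed

lemma box_meas:
  assumes "lo < hi"
  shows "boxs a b lo hi \<in> sets (Pi\<^sub>M {..<a+b-1} (\<lambda>_. lborel))"
    "emeasure (Pi\<^sub>M {..<a+b-1} (\<lambda>_. lborel)) (boxs a b lo hi) \<noteq> 0"
proof -
  interpret product_sigma_finite "\<lambda>_::nat. lborel::real measure"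
    by (simp add: product_sigma_finite_def lborel.sigma_finite_measure_axioms)
  define I where "I = (\<lambda>i. if i < a+b-2
     then {real i / (100 * real (a+b-2) ^ 2) .. real (Suc i) / (100 * real (a+b-2) ^ 2)} else {lo..hi})"
  have bI: "boxs a b lo hi = PiE {..<a+b-1} I" unfolding boxs_def I_def ..
  show "boxs a b lo hi \<in> sets (Pi\<^sub>M {..<a+b-1} (\<lambda>_. lborel))"
    unfolding bI by (rule sets_PiM_I_finite) (auto simp: I_def)
  have "emeasure (Pi\<^sub>M {..<a+b-1} (\<lambda>_. lborel)) (PiE {..<a+b-1} I) = (\<Prod>i<a+b-1. emeasure lborel (I i))"
    by (rule emeasure_PiM) (auto simp: I_def)
  also have "\<dots> \<noteq> 0"
  proof -
    have "\<And>i. emeasure lborel (I i) \<noteq> 0"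
    proof -
      fix i
      show "emeasure lborel (I i) \<noteq> 0"
      proof (cases "i < a+b-2")
        case True
        then have K: "real (a+b-2) > 0" by simp
        have "real i / (100 * real (a+b-2) ^ 2) < real (Suc i) / (100 * real (a+b-2) ^ 2)"
          using K by (intro divide_strict_right_mono) auto
        then show ?thesis using True unfolding I_def by (simp add: ennreal_eq_0_iff)
      next
        case False then show ?thesis using assms unfolding I_def by (simp add: ennreal_eq_0_iff)
      qed
    qed
    then show ?thesis by (simp add: prod_zero_iff)
  qed
  finally show "emeasure (Pi\<^sub>M {..<a+b-1} (\<lambda>_. lborel)) (boxs a b lo hi) \<noteq> 0" unfolding bI .
qed


theorem theorem1p4:
  fixes a b :: nat
  assumes "a \<ge> 1" and "b \<ge> 3"
  shows "\<not> ergodic_map (lebesgue_n (a + b - 1)) (B_set a b) (S_map a b)"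
proof
  assume erg: "ergodic_map (lebesgue_n (a + b - 1)) (B_set a b) (S_map a b)"
  define P where "P = Pi\<^sub>M {..<a+b-1} (\<lambda>_. (lborel::real measure))"
  define S where "S = S_map a b"
  define B where "B = B_set a b"
  have PM: "lebesgue_n (a + b - 1) = completion P" unfolding lebesgue_n_def P_def ..
  have Sm: "S \<in> measurable P P" unfolding S_def P_def using assms by (intro S_meas) auto
  have Bs: "B \<in> sets P" unfolding B_def P_def by (rule B_sets)
  have A1s: "A1 a b \<in> sets P" and A2s: "A2 a b \<in> sets P" unfolding P_def by (rule A_sets)+
  have A1B: "A1 a b \<subseteq> B" and A2B: "A2 a b \<subseteq> B" unfolding A1_def A2_def Dset_def B_def by auto
  define E where "E = {z. \<exists>k. (\<forall>j\<le>k. (S ^^ j) z \<in> B) \<and> (S ^^ k) z \<in> A1 a b}"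
  have EB: "E \<subseteq> B" unfolding E_def by (auto dest: spec[of _ 0])
  have BP: "B \<subseteq> space P" using Bs sets.sets_into_space by blast
  have Es: "E \<in> sets P"
  proof -
    have "E = (\<Union>k. {z \<in> space P. \<forall>j\<in>{..k}. (S ^^ j) z \<in> B} \<inter> ((S ^^ k) -` A1 a b \<inter> space P))"
      using EB BP unfolding E_def by auto
    also have "\<dots> \<in> sets P"
    proof -
      have jm: "\<And>j. {z \<in> space P. (S ^^ j) z \<in> B} \<in> sets P"
      proof -
        fix j
        have "{z \<in> space P. (S ^^ j) z \<in> B} = (S ^^ j) -` B \<inter> space P" by auto
        also have "\<dots> \<in> sets P" using measurable_compose_n[OF Sm] Bs by (rule measurable_sets)
        finally show "{z \<in> space P. (S ^^ j) z \<in> B} \<in> sets P" .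
      qed
      have X: "\<And>k. {z \<in> space P. \<forall>j\<in>{..k}. (S ^^ j) z \<in> B} \<in> sets P"
        by (rule sets.sets_Collect_finite_All[OF jm]) simp
      have Y: "\<And>k. (S ^^ k) -` A1 a b \<inter> space P \<in> sets P"
        using measurable_compose_n[OF Sm] A1s by (rule measurable_sets)
      show ?thesis using X Y by (intro sets.countable_UN) auto
    qed
    finally show ?thesis .
  qed
  have inv: "{z \<in> B. S z \<in> E} = E"
  proof
    show "{z \<in> B. S z \<in> E} \<subseteq> E"
    proof
      fix z assume z: "z \<in> {z \<in> B. S z \<in> E}"
      then obtain k where k: "\<forall>j\<le>k. (S ^^ j) (S z) \<in> B" "(S ^^ k) (S z) \<in> A1 a b"
        unfolding E_def by auto
      have "\<forall>j\<le>Suc k. (S ^^ j) z \<in> B"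
      proof (intro allI impI)
        fix j assume "j \<le> Suc k"
        then show "(S ^^ j) z \<in> B"
          using z k(1) by (cases j) (auto simp: funpow_Suc_right simp del: funpow.simps)
      qed
      moreover have "(S ^^ Suc k) z \<in> A1 a b" using k(2) by (simp add: funpow_Suc_right del: funpow.simps)
      ultimately show "z \<in> E" unfolding E_def by blast
    qed
  next
    show "E \<subseteq> {z \<in> B. S z \<in> E}"
    proof
      fix z assume z: "z \<in> E"
      then obtain k where k: "\<forall>j\<le>k. (S ^^ j) z \<in> B" "(S ^^ k) z \<in> A1 a b"
        unfolding E_def by auto
      have zB: "z \<in> B" using z EB by auto
      show "z \<in> {z \<in> B. S z \<in> E}"
      proof (cases k)
        case 0
        then have "z \<in> A1 a b" using k by simp
        then have "S z \<in> A1 a b" unfolding S_def using A1_step assms by blast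
        then have "S z \<in> E" unfolding E_def using A1B by (intro CollectI exI[of _ 0]) auto
        then show ?thesis using zB by simp
      next
        case (Suc k')
        have "\<forall>j\<le>k'. (S ^^ j) (S z) \<in> B"
        proof (intro allI impI)
          fix j assume "j \<le> k'"
          then have "(S ^^ Suc j) z \<in> B" using k(1) Suc by auto
          then show "(S ^^ j) (S z) \<in> B" by (simp add: funpow_Suc_right del: funpow.simps)
        qed
        moreover have "(S ^^ k') (S z) \<in> A1 a b" using k(2) Suc by (simp add: funpow_Suc_right del: funpow.simps)
        ultimately have "S z \<in> E" unfolding E_def by blast
        then show ?thesis using zB by simp
      qed
    qed
  qed
  have A1E: "A1 a b \<subseteq> E" unfolding E_def using A1B by (auto intro!: exI[of _ 0])
  have A2E: "A2 a b \<subseteq> B - E"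
  proof
    fix z assume z: "z \<in> A2 a b"
    have "z \<notin> E"
    proof
      assume "z \<in> E"
      then obtain k where "(S ^^ k) z \<in> A1 a b" unfolding E_def by auto
      moreover have "(S ^^ k) z \<in> A2 a b" unfolding S_def using A2_iter[OF assms z] .
      ultimately show False using A12_disj by blast
    qed
    then show "z \<in> B - E" using z A2B by auto
  qed
  have BEs: "B - E \<in> sets P" using Bs Es by auto
  have cm: "\<And>X. X \<in> sets P \<Longrightarrow> emeasure (completion P) X = emeasure P X"
    by (simp add: emeasure_completion main_part)
  have "emeasure P (boxs a b (1/2) (3/4)) \<le> emeasure P E"
    using box_A1[OF assms] A1E Es by (intro emeasure_mono) auto
  moreover have "emeasure P (boxs a b (1/2) (3/4)) \<noteq> 0" unfolding P_def by (rule box_meas) simp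
  ultimately have E0: "emeasure P E \<noteq> 0" by (metis le_zero_eq)
  have "emeasure P (boxs a b (1/8) (1/4)) \<le> emeasure P (B - E)"
    using box_A2[OF assms] A2E BEs by (intro emeasure_mono) auto
  moreover have "emeasure P (boxs a b (1/8) (1/4)) \<noteq> 0" unfolding P_def by (rule box_meas) simp
  ultimately have BE0: "emeasure P (B - E) \<noteq> 0" by (metis le_zero_eq)
  have Ec: "E \<in> sets (completion P)" using Es by (rule sets_completionI_sets)
  from erg[unfolded ergodic_map_def PM, folded B_def S_def, rule_format, OF Ec EB inv]
  show False using E0 BE0 cm[OF Es] cm[OF BEs] by simp
qed

end
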